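(* Let $G$ be a finitely generated group satisfying Kůrka's dichotomy, and let $H$ be a finitely generated subgroup of $G$. Then $H$ satisfies Kůrka's dichotomy.
   Context: For a finitely generated group $\Gamma$ with finite generating set $E$ closed under inverses, let $d_E$ be the word metric and define the Cantor metric on $A^\Gamma$ ($A$ a finite alphabet) by $d^E(x,y)=2^{-k}$ with $k=\min\{d_E(1,g): x(g)\neq y(g)\}$; $B^E(x,r)$ is its closed ball. A cellular automaton (CA) on $\Gamma$ with alphabet $A$ is a map $\Phi:A^\Gamma\to A^\Gamma$ given by a finite $S\subseteq\Gamma$ and $\mu:A^S\to A$ via $\Phi(x)(g)=\mu(s\mapsto x(gs))$. $x$ is an equicontinuity point of $\Phi$ if $\forall\epsilon>0\,\exists\delta>0\,\forall t\in\mathbb{N}$, $\Phi^t(B^E(x,\delta))\subseteq B^E(\Phi^t(x),\epsilon)$. $\Phi$ is sensitive to initial conditions if $\exists\epsilon>0\,\forall x\,\forall\delta>0\,\exists t\in\mathbb{N}\,\exists y\in B^E(x,\delta)$ with $\Phi^t(y)\notin B^E(\Phi^t(x),\epsilon)$. These notions do not depend on $E$. The group $\Gamma$ satisfies Kůrka's dichotomy if for every finite alphabet $A$, every CA on $\Gamma$ that is not sensitive to initial conditions has an equicontinuity point (equivalently: a CA on $\Gamma$ is sensitive iff it has no equicontinuity point). *)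

theory Defs
  imports Complex_Main "HOL-Algebra.Generated_Groups" "HOL-Library.FuncSet"
begin

definition sym_fin_gen :: "('g, 'b) monoid_scheme \<Rightarrow> 'g set \<Rightarrow> bool" where
  "sym_fin_gen G E \<longleftrightarrow> finite E \<and> E \<subseteq> carrier G \<and> (\<forall>e\<in>E. inv\<^bsub>G\<^esub> e \<in> E)
      \<and> generate G E = carrier G"

definition fin_gen_group :: "('g, 'b) monoid_scheme \<Rightarrow> bool" where
  "fin_gen_group G \<longleftrightarrow> group G \<and> (\<exists>E. sym_fin_gen G E)"

definition word_len :: "('g, 'b) monoid_scheme \<Rightarrow> 'g set \<Rightarrow> 'g \<Rightarrow> nat" where
  "word_len G E g = (LEAST n. \<exists>ws. set ws \<subseteq> E \<and> length ws = n
                         \<and> foldr (\<lambda>a b. a \<otimes>\<^bsub>G\<^esub> b) ws \<one>\<^bsub>G\<^esub> = g)"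

text \<open>Configurations A^Gamma: extensional functions on the carrier. Alphabets are
  finite sets of naturals (every finite alphabet is in bijection with one).\<close>
definition configs :: "('g, 'b) monoid_scheme \<Rightarrow> nat set \<Rightarrow> ('g \<Rightarrow> nat) set" where
  "configs G A = carrier G \<rightarrow>\<^sub>E A"

definition cantor_dist :: "('g, 'b) monoid_scheme \<Rightarrow> 'g set \<Rightarrow> ('g \<Rightarrow> nat) \<Rightarrow> ('g \<Rightarrow> nat) \<Rightarrow> real" where
  "cantor_dist G E x y =
     (if \<forall>g\<in>carrier G. x g = y g then 0
      else (1/2) ^ (LEAST k. \<exists>g\<in>carrier G. x g \<noteq> y g \<and> word_len G E g = k))"

definition cball_E :: "('g, 'b) monoid_scheme \<Rightarrow> 'g set \<Rightarrow> nat set \<Rightarrow> ('g \<Rightarrow> nat) \<Rightarrow> real \<Rightarrow> ('g \<Rightarrow> nat) set" where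
  "cball_E G E A x r = {y \<in> configs G A. cantor_dist G E x y \<le> r}"

definition local_rule :: "('g, 'b) monoid_scheme \<Rightarrow> nat set \<Rightarrow> 'g set \<Rightarrow> (('g \<Rightarrow> nat) \<Rightarrow> nat) \<Rightarrow> bool" where
  "local_rule G A S \<mu> \<longleftrightarrow> finite S \<and> S \<subseteq> carrier G \<and> \<mu> \<in> (S \<rightarrow>\<^sub>E A) \<rightarrow> A"

definition CA :: "('g, 'b) monoid_scheme \<Rightarrow> 'g set \<Rightarrow> (('g \<Rightarrow> nat) \<Rightarrow> nat) \<Rightarrow> ('g \<Rightarrow> nat) \<Rightarrow> ('g \<Rightarrow> nat)" where
  "CA G S \<mu> x = (\<lambda>g\<in>carrier G. \<mu> (\<lambda>s\<in>S. x (g \<otimes>\<^bsub>G\<^esub> s)))"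

definition equicont_point ::
  "('g, 'b) monoid_scheme \<Rightarrow> 'g set \<Rightarrow> nat set \<Rightarrow> (('g \<Rightarrow> nat) \<Rightarrow> ('g \<Rightarrow> nat)) \<Rightarrow> ('g \<Rightarrow> nat) \<Rightarrow> bool" where
  "equicont_point G E A \<Phi> x \<longleftrightarrow>
     (\<forall>\<epsilon>>0. \<exists>\<delta>>0. \<forall>t::nat. (\<Phi> ^^ t) ` cball_E G E A x \<delta> \<subseteq> cball_E G E A ((\<Phi> ^^ t) x) \<epsilon>)"

definition sensitive ::
  "('g, 'b) monoid_scheme \<Rightarrow> 'g set \<Rightarrow> nat set \<Rightarrow> (('g \<Rightarrow> nat) \<Rightarrow> ('g \<Rightarrow> nat)) \<Rightarrow> bool" where
  "sensitive G E A \<Phi> \<longleftrightarrow>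
     (\<exists>\<epsilon>>0. \<forall>x\<in>configs G A. \<forall>\<delta>>0. \<exists>t::nat. \<exists>y\<in>cball_E G E A x \<delta>.
         (\<Phi> ^^ t) y \<notin> cball_E G E A ((\<Phi> ^^ t) x) \<epsilon>)"

text \<open>Kurka's dichotomy (stated for every symmetric finite generating set E; the notions
  are independent of E).\<close>
definition kurka_dichotomy :: "('g, 'b) monoid_scheme \<Rightarrow> bool" where
  "kurka_dichotomy G \<longleftrightarrow>
     (\<forall>A E S \<mu>. finite A \<and> sym_fin_gen G E \<and> local_rule G A S \<mu> \<and>
        \<not> sensitive G E A (CA G S \<mu>) \<longrightarrow>
        (\<exists>x\<in>configs G A. equicont_point G E A (CA G S \<mu>) x))"

end

theory Submission
  imports Defs
begin

definition agree :: "'g set \<Rightarrow> ('g \<Rightarrow> nat) \<Rightarrow> ('g \<Rightarrow> nat) \<Rightarrow> bool" where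
  "agree F x y \<longleftrightarrow> (\<forall>g\<in>F. x g = y g)"

definition EQf :: "('g, 'b) monoid_scheme \<Rightarrow> nat set \<Rightarrow> (('g \<Rightarrow> nat) \<Rightarrow> ('g \<Rightarrow> nat)) \<Rightarrow> ('g \<Rightarrow> nat) \<Rightarrow> bool" where
  "EQf K A \<Phi> x \<longleftrightarrow> (\<forall>F. finite F \<and> F \<subseteq> carrier K \<longrightarrow> (\<exists>D. finite D \<and> D \<subseteq> carrier K \<and>
     (\<forall>t. \<forall>y\<in>configs K A. agree D x y \<longrightarrow> agree F ((\<Phi>^^t) x) ((\<Phi>^^t) y))))"

definition NSf :: "('g, 'b) monoid_scheme \<Rightarrow> nat set \<Rightarrow> (('g \<Rightarrow> nat) \<Rightarrow> ('g \<Rightarrow> nat)) \<Rightarrow> bool" where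
  "NSf K A \<Phi> \<longleftrightarrow> (\<forall>F. finite F \<and> F \<subseteq> carrier K \<longrightarrow> (\<exists>x\<in>configs K A. \<exists>D. finite D \<and> D \<subseteq> carrier K \<and>
     (\<forall>t. \<forall>y\<in>configs K A. agree D x y \<longrightarrow> agree F ((\<Phi>^^t) x) ((\<Phi>^^t) y))))"

lemma funpow_configs:
  assumes "\<forall>z\<in>configs K A. \<Phi> z \<in> configs K A" "z \<in> configs K A"
  shows "(\<Phi>^^t) z \<in> configs K A"
  using assms by (induction t) auto

lemma cantor_le_iff:
  "cantor_dist K E x y \<le> (1/2)^k \<longleftrightarrow> (\<forall>g\<in>carrier K. word_len K E g < k \<longrightarrow> x g = y g)"
proof (cases "\<forall>g\<in>carrier K. x g = y g")
  case True
  then show ?thesis by (simp add: cantor_dist_def)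
next
  case False
  define P where "P m \<longleftrightarrow> (\<exists>g\<in>carrier K. x g \<noteq> y g \<and> word_len K E g = m)" for m
  have ex: "\<exists>m. P m" using False unfolding P_def by auto
  have d: "cantor_dist K E x y = (1/2)^(Least P)"
    using False unfolding cantor_dist_def P_def by simp
  have "(1/2::real)^(Least P) \<le> (1/2)^k \<longleftrightarrow> k \<le> Least P" by simp
  moreover have "k \<le> Least P \<longleftrightarrow> (\<forall>g\<in>carrier K. word_len K E g < k \<longrightarrow> x g = y g)"
  proof
    assume k: "k \<le> Least P"
    show "\<forall>g\<in>carrier K. word_len K E g < k \<longrightarrow> x g = y g"
    proof (intro ballI impI)
      fix g assume g: "g \<in> carrier K" "word_len K E g < k"
      show "x g = y g"
      proof (rule ccontr)
        assume "x g \<noteq> y g"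
        then have "P (word_len K E g)" using g unfolding P_def by blast
        then have "Least P \<le> word_len K E g" by (rule Least_le)
        then show False using k g(2) by simp
      qed
    qed
  next
    assume a: "\<forall>g\<in>carrier K. word_len K E g < k \<longrightarrow> x g = y g"
    have "P (Least P)" using ex by (rule LeastI_ex)
    then obtain g where g: "g \<in> carrier K" "x g \<noteq> y g" "word_len K E g = Least P"
      unfolding P_def by blast
    show "k \<le> Least P"
    proof (rule ccontr)
      assume "\<not> k \<le> Least P"
      then show False using a g by auto
    qed
  qed
  ultimately show ?thesis using d by simp
qed

context group
begin

lemma foldr_closed: "set ws \<subseteq> carrier G \<Longrightarrow> foldr (\<lambda>a b. a \<otimes> b) ws \<one> \<in> carrier G"
  by (induction ws) auto

lemma foldr_shift: "set ws \<subseteq> carrier G \<Longrightarrow> z \<in> carrier G \<Longrightarrow>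
   foldr (\<lambda>a b. a \<otimes> b) ws z = foldr (\<lambda>a b. a \<otimes> b) ws \<one> \<otimes> z"
  by (induction ws) (auto simp: m_assoc foldr_closed)

lemma word_exists:
  assumes "sym_fin_gen G E" "g \<in> carrier G"
  shows "\<exists>ws. set ws \<subseteq> E \<and> foldr (\<lambda>a b. a \<otimes> b) ws \<one> = g"
proof -
  have E: "E \<subseteq> carrier G" "\<And>e. e\<in>E \<Longrightarrow> inv e \<in> E" and gen: "generate G E = carrier G"
    using assms(1) unfolding sym_fin_gen_def by auto
  have "g \<in> generate G E" using gen assms(2) by simp
  then show ?thesis
  proof (induction rule: generate.induct)
    case one then show ?case by (intro exI[of _ "[]"]) auto
  next
    case (incl h) then show ?case using E by (intro exI[of _ "[h]"]) auto
  next
    case (inv h) then show ?case using E by (intro exI[of _ "[inv h]"]) auto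
  next
    case (eng h1 h2)
    then obtain w1 w2 where w: "set w1 \<subseteq> E" "foldr (\<lambda>a b. a \<otimes> b) w1 \<one> = h1"
       "set w2 \<subseteq> E" "foldr (\<lambda>a b. a \<otimes> b) w2 \<one> = h2" by blast
    have "foldr (\<lambda>a b. a \<otimes> b) (w1 @ w2) \<one> = h1 \<otimes> h2"
      using w E foldr_shift[of w1 "foldr (\<lambda>a b. a \<otimes> b) w2 \<one>"] foldr_closed[of w2] by auto
    then show ?case using w by (intro exI[of _ "w1 @ w2"]) auto
  qed
qed

lemma ball_finite:
  assumes "sym_fin_gen G E"
  shows "finite {g\<in>carrier G. word_len G E g < k}"
proof -
  let ?f = "\<lambda>ws. foldr (\<lambda>a b. a \<otimes> b) ws \<one>"
  have fE: "finite E" using assms unfolding sym_fin_gen_def by auto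
  have "{g\<in>carrier G. word_len G E g < k} \<subseteq> ?f ` {ws. set ws \<subseteq> E \<and> length ws \<le> k}"
  proof
    fix g assume g: "g \<in> {g\<in>carrier G. word_len G E g < k}"
    then have "\<exists>n ws. set ws \<subseteq> E \<and> length ws = n \<and> ?f ws = g"
      using word_exists[OF assms] by blast
    then have "\<exists>ws. set ws \<subseteq> E \<and> length ws = word_len G E g \<and> ?f ws = g"
      unfolding word_len_def by (rule LeastI_ex)
    then show "g \<in> ?f ` {ws. set ws \<subseteq> E \<and> length ws \<le> k}" using g by force
  qed
  moreover have "finite (?f ` {ws. set ws \<subseteq> E \<and> length ws \<le> k})"
    using finite_lists_length_le[OF fE] by blast
  ultimately show ?thesis by (rule finite_subset)
qed

lemma ball_cover:
  assumes "finite F" "F \<subseteq> carrier G"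
  shows "\<exists>k. F \<subseteq> {g\<in>carrier G. word_len G E g < k}"
proof -
  have "\<And>g. g \<in> F \<Longrightarrow> word_len G E g < Suc (Max (insert 0 (word_len G E ` F)))"
  proof -
    fix g assume "g \<in> F"
    then have "word_len G E g \<le> Max (insert 0 (word_len G E ` F))"
      using assms(1) by (intro Max_ge) auto
    then show "word_len G E g < Suc (Max (insert 0 (word_len G E ` F)))" by linarith
  qed
  then show ?thesis using assms(2) by (intro exI[of _ "Suc (Max (insert 0 (word_len G E ` F)))"]) auto
qed

lemma CA_configs:
  assumes "local_rule G A S \<mu>" "z \<in> configs G A"
  shows "CA G S \<mu> z \<in> configs G A"
proof -
  have S: "S \<subseteq> carrier G" and mu: "\<mu> \<in> (S \<rightarrow>\<^sub>E A) \<rightarrow> A" using assms(1) unfolding local_rule_def by auto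
  have z: "z \<in> carrier G \<rightarrow>\<^sub>E A" using assms(2) unfolding configs_def by simp
  have "\<And>g. g \<in> carrier G \<Longrightarrow> (\<lambda>s\<in>S. z (g \<otimes> s)) \<in> S \<rightarrow>\<^sub>E A"
    using S z by (auto simp: restrict_PiE_iff)
  then have "\<And>g. g \<in> carrier G \<Longrightarrow> \<mu> (\<lambda>s\<in>S. z (g \<otimes> s)) \<in> A"
    by (rule funcset_mem[OF mu])
  then show ?thesis unfolding CA_def configs_def by (simp add: restrict_PiE_iff)
qed


lemma cball_in:
  assumes "y \<in> configs G A" "agree {g\<in>carrier G. word_len G E g < k} x y" "(1/2)^k \<le> \<epsilon>"
  shows "y \<in> cball_E G E A x \<epsilon>"
proof -
  have "cantor_dist G E x y \<le> (1/2)^k" using assms(2) unfolding cantor_le_iff agree_def by auto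
  then show ?thesis using assms(1,3) unfolding cball_E_def by auto
qed

lemma cball_out:
  assumes "y \<in> cball_E G E A x \<epsilon>" "\<epsilon> \<le> (1/2)^k"
  shows "y \<in> configs G A" "agree {g\<in>carrier G. word_len G E g < k} x y"
proof -
  show "y \<in> configs G A" using assms unfolding cball_E_def by auto
  have "cantor_dist G E x y \<le> (1/2)^k" using assms unfolding cball_E_def by auto
  then show "agree {g\<in>carrier G. word_len G E g < k} x y" unfolding cantor_le_iff agree_def by auto
qed

lemma small_pow: "(\<epsilon>::real) > 0 \<Longrightarrow> \<exists>k. (1/2::real)^k \<le> \<epsilon>"
  using real_arch_pow_inv[of \<epsilon> "1/2"] by (auto intro: less_imp_le)

lemma agree_mono: "agree F x y \<Longrightarrow> D \<subseteq> F \<Longrightarrow> agree D x y"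
  unfolding agree_def by auto

lemma eq_iff:
  assumes E: "sym_fin_gen G E" and pres: "\<forall>z\<in>configs G A. \<Phi> z \<in> configs G A"
  shows "equicont_point G E A \<Phi> x \<longleftrightarrow> EQf G A \<Phi> x"
proof
  assume eq: "equicont_point G E A \<Phi> x"
  show "EQf G A \<Phi> x" unfolding EQf_def
  proof (intro allI impI)
    fix F assume F: "finite F \<and> F \<subseteq> carrier G"
    then obtain k where k: "F \<subseteq> {g\<in>carrier G. word_len G E g < k}" using ball_cover by blast
    obtain \<delta> where d: "\<delta> > 0" "\<forall>t. (\<Phi>^^t) ` cball_E G E A x \<delta> \<subseteq> cball_E G E A ((\<Phi>^^t) x) ((1/2)^k)"
      using eq unfolding equicont_point_def by (meson zero_less_divide_1_iff zero_less_numeral zero_less_power)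
    obtain j where j: "(1/2::real)^j \<le> \<delta>" using small_pow[OF d(1)] by blast
    show "\<exists>D. finite D \<and> D \<subseteq> carrier G \<and>
     (\<forall>t. \<forall>y\<in>configs G A. agree D x y \<longrightarrow> agree F ((\<Phi>^^t) x) ((\<Phi>^^t) y))"
    proof (intro exI conjI allI ballI impI)
      show "finite {g\<in>carrier G. word_len G E g < j}" by (rule ball_finite[OF E])
      show "{g\<in>carrier G. word_len G E g < j} \<subseteq> carrier G" by auto
      fix t y assume y: "y \<in> configs G A" "agree {g\<in>carrier G. word_len G E g < j} x y"
      have "y \<in> cball_E G E A x \<delta>" by (rule cball_in[OF y j])
      then have "(\<Phi>^^t) y \<in> cball_E G E A ((\<Phi>^^t) x) ((1/2)^k)" using d(2) by blast
      then have "agree {g\<in>carrier G. word_len G E g < k} ((\<Phi>^^t) x) ((\<Phi>^^t) y)"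
        by (rule cball_out) simp
      then show "agree F ((\<Phi>^^t) x) ((\<Phi>^^t) y)" using k by (rule agree_mono)
    qed
  qed
next
  assume eq: "EQf G A \<Phi> x"
  show "equicont_point G E A \<Phi> x" unfolding equicont_point_def
  proof (intro allI impI)
    fix \<epsilon> :: real assume e: "\<epsilon> > 0"
    obtain k where k: "(1/2::real)^k \<le> \<epsilon>" using small_pow[OF e] by blast
    obtain D where D: "finite D" "D \<subseteq> carrier G"
      "\<forall>t. \<forall>y\<in>configs G A. agree D x y \<longrightarrow> agree {g\<in>carrier G. word_len G E g < k} ((\<Phi>^^t) x) ((\<Phi>^^t) y)"
      using eq ball_finite[OF E, of k] unfolding EQf_def by (metis (no_types, lifting) mem_Collect_eq subsetI)
    obtain j where j: "D \<subseteq> {g\<in>carrier G. word_len G E g < j}" using ball_cover[OF D(1,2)] by blast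
    show "\<exists>\<delta>>0. \<forall>t. (\<Phi>^^t) ` cball_E G E A x \<delta> \<subseteq> cball_E G E A ((\<Phi>^^t) x) \<epsilon>"
    proof (intro exI conjI allI subsetI)
      show "(1/2::real)^j > 0" by simp
      fix t z assume "z \<in> (\<Phi>^^t) ` cball_E G E A x ((1/2)^j)"
      then obtain y where y: "y \<in> cball_E G E A x ((1/2)^j)" and z: "z = (\<Phi>^^t) y" by blast
      have yc: "y \<in> configs G A" by (rule cball_out(1)[OF y order_refl])
      have "agree {g\<in>carrier G. word_len G E g < j} x y" by (rule cball_out(2)[OF y order_refl])
      then have "agree D x y" using j by (rule agree_mono)
      then have "agree {g\<in>carrier G. word_len G E g < k} ((\<Phi>^^t) x) ((\<Phi>^^t) y)" using D(3) yc by blast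
      moreover have "(\<Phi>^^t) y \<in> configs G A" using funpow_configs[OF pres yc] .
      ultimately show "z \<in> cball_E G E A ((\<Phi>^^t) x) \<epsilon>" using z cball_in k by blast
    qed
  qed
qed

lemma ns_iff:
  assumes E: "sym_fin_gen G E" and pres: "\<forall>z\<in>configs G A. \<Phi> z \<in> configs G A"
  shows "\<not> sensitive G E A \<Phi> \<longleftrightarrow> NSf G A \<Phi>"
proof
  assume ns: "\<not> sensitive G E A \<Phi>"
  show "NSf G A \<Phi>" unfolding NSf_def
  proof (intro allI impI)
    fix F assume F: "finite F \<and> F \<subseteq> carrier G"
    then obtain k where k: "F \<subseteq> {g\<in>carrier G. word_len G E g < k}" using ball_cover by blast
    have "(1/2::real)^k > 0" by simp
    then obtain x \<delta> where x: "x \<in> configs G A" "\<delta> > 0"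
      "\<forall>t. \<forall>y\<in>cball_E G E A x \<delta>. (\<Phi>^^t) y \<in> cball_E G E A ((\<Phi>^^t) x) ((1/2)^k)"
      using ns unfolding sensitive_def by blast
    obtain j where j: "(1/2::real)^j \<le> \<delta>" using small_pow[OF x(2)] by blast
    show "\<exists>x\<in>configs G A. \<exists>D. finite D \<and> D \<subseteq> carrier G \<and>
     (\<forall>t. \<forall>y\<in>configs G A. agree D x y \<longrightarrow> agree F ((\<Phi>^^t) x) ((\<Phi>^^t) y))"
    proof (intro bexI[OF _ x(1)] exI conjI allI ballI impI)
      show "finite {g\<in>carrier G. word_len G E g < j}" by (rule ball_finite[OF E])
      show "{g\<in>carrier G. word_len G E g < j} \<subseteq> carrier G" by auto
      fix t y assume y: "y \<in> configs G A" "agree {g\<in>carrier G. word_len G E g < j} x y"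
      have "y \<in> cball_E G E A x \<delta>" by (rule cball_in[OF y j])
      then have "(\<Phi>^^t) y \<in> cball_E G E A ((\<Phi>^^t) x) ((1/2)^k)" using x(3) by blast
      then have "agree {g\<in>carrier G. word_len G E g < k} ((\<Phi>^^t) x) ((\<Phi>^^t) y)"
        by (rule cball_out) simp
      then show "agree F ((\<Phi>^^t) x) ((\<Phi>^^t) y)" using k by (rule agree_mono)
    qed
  qed
next
  assume ns: "NSf G A \<Phi>"
  show "\<not> sensitive G E A \<Phi>" unfolding sensitive_def
  proof (intro notI, elim exE conjE)
    fix \<epsilon> :: real assume e: "\<epsilon> > 0" and sens: "\<forall>x\<in>configs G A. \<forall>\<delta>>0. \<exists>t. \<exists>y\<in>cball_E G E A x \<delta>.
         (\<Phi> ^^ t) y \<notin> cball_E G E A ((\<Phi> ^^ t) x) \<epsilon>"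
    obtain k where k: "(1/2::real)^k \<le> \<epsilon>" using small_pow[OF e] by blast
    obtain x D where D: "x \<in> configs G A" "finite D" "D \<subseteq> carrier G"
      "\<forall>t. \<forall>y\<in>configs G A. agree D x y \<longrightarrow> agree {g\<in>carrier G. word_len G E g < k} ((\<Phi>^^t) x) ((\<Phi>^^t) y)"
      using ns ball_finite[OF E, of k] unfolding NSf_def by (metis (no_types, lifting) mem_Collect_eq subsetI)
    obtain j where j: "D \<subseteq> {g\<in>carrier G. word_len G E g < j}" using ball_cover[OF D(2,3)] by blast
    have "(1/2::real)^j > 0" by simp
    then obtain t y where y: "y \<in> cball_E G E A x ((1/2)^j)"
       and bad: "(\<Phi> ^^ t) y \<notin> cball_E G E A ((\<Phi> ^^ t) x) \<epsilon>"
      using sens D(1) by blast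
    have yc: "y \<in> configs G A" by (rule cball_out(1)[OF y order_refl])
    have "agree {g\<in>carrier G. word_len G E g < j} x y" by (rule cball_out(2)[OF y order_refl])
    then have "agree D x y" using j by (rule agree_mono)
    then have "agree {g\<in>carrier G. word_len G E g < k} ((\<Phi>^^t) x) ((\<Phi>^^t) y)" using D(4) yc by blast
    moreover have "(\<Phi>^^t) y \<in> configs G A" using funpow_configs[OF pres yc] .
    ultimately show False using bad cball_in k by blast
  qed
qed

end


definition rep :: "('g, 'b) monoid_scheme \<Rightarrow> 'g set \<Rightarrow> 'g \<Rightarrow> 'g" where
  "rep G H g = (SOME r. r \<in> carrier G \<and> inv\<^bsub>G\<^esub> r \<otimes>\<^bsub>G\<^esub> g \<in> H)"

context group
begin

context
  fixes H assumes sub: "subgroup H G"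
begin

lemma Hc: "H \<subseteq> carrier G" by (rule subgroup.subset[OF sub])

lemma Hm: "a \<in> H \<Longrightarrow> b \<in> H \<Longrightarrow> a \<otimes> b \<in> H" by (rule subgroup.m_closed[OF sub])

lemma Hi: "a \<in> H \<Longrightarrow> inv a \<in> H" by (rule subgroup.m_inv_closed[OF sub])

lemma rep_P: "g \<in> carrier G \<Longrightarrow> rep G H g \<in> carrier G \<and> inv (rep G H g) \<otimes> g \<in> H"
  unfolding rep_def
proof (rule someI)
  assume "g \<in> carrier G"
  then show "g \<in> carrier G \<and> inv g \<otimes> g \<in> H" using sub subgroup.one_closed by force
qed

lemma rep_eq:
  assumes g: "g \<in> carrier G" "g' \<in> carrier G" "inv g \<otimes> g' \<in> H"
  shows "rep G H g' = rep G H g"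
proof -
  have "\<And>r. r \<in> carrier G \<Longrightarrow> (inv r \<otimes> g \<in> H \<longleftrightarrow> inv r \<otimes> g' \<in> H)"
  proof -
    fix r assume r: "r \<in> carrier G"
    have e: "g \<otimes> (inv g \<otimes> g') = g'" using g by (simp add: m_assoc[symmetric])
    have 1: "inv r \<otimes> g' = (inv r \<otimes> g) \<otimes> (inv g \<otimes> g')" using r g e by (simp add: m_assoc)
    have i: "inv (inv g \<otimes> g') = inv g' \<otimes> g" using g by (simp add: inv_mult_group)
    have e2: "g' \<otimes> (inv g' \<otimes> g) = g" using g by (simp add: m_assoc[symmetric])
    have 2: "inv r \<otimes> g = (inv r \<otimes> g') \<otimes> inv (inv g \<otimes> g')" using r g e2 i by (simp add: m_assoc)
    have h3: "inv (inv g \<otimes> g') \<in> H" using Hi g(3) by blast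
    show "inv r \<otimes> g \<in> H \<longleftrightarrow> inv r \<otimes> g' \<in> H"
    proof
      assume "inv r \<otimes> g \<in> H" then show "inv r \<otimes> g' \<in> H" using 1 Hm g(3) by simp
    next
      assume "inv r \<otimes> g' \<in> H" then show "inv r \<otimes> g \<in> H" using 2 Hm h3 by simp
    qed
  qed
  then have "(\<lambda>r. r \<in> carrier G \<and> inv r \<otimes> g' \<in> H) = (\<lambda>r. r \<in> carrier G \<and> inv r \<otimes> g \<in> H)"
    by blast
  then show ?thesis unfolding rep_def by simp
qed

lemma rep_rep: "g \<in> carrier G \<Longrightarrow> rep G H (rep G H g) = rep G H g"
proof -
  assume g: "g \<in> carrier G"
  have r: "rep G H g \<in> carrier G" "inv (rep G H g) \<otimes> g \<in> H" using rep_P[OF g] by auto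
  have "inv (inv (rep G H g) \<otimes> g) = inv g \<otimes> rep G H g" using r g by (simp add: inv_mult_group)
  then have "inv g \<otimes> rep G H g \<in> H" using Hi[OF r(2)] by simp
  then show ?thesis using rep_eq[OF g r(1)] by simp
qed

lemma rep_mult: "r \<in> carrier G \<Longrightarrow> h \<in> H \<Longrightarrow> rep G H (r \<otimes> h) = rep G H r"
proof -
  assume r: "r \<in> carrier G" and h: "h \<in> H"
  have hc: "h \<in> carrier G" using h Hc by blast
  have "inv r \<otimes> (r \<otimes> h) = h" using r hc by (simp add: m_assoc[symmetric])
  then show ?thesis using rep_eq[of r "r \<otimes> h"] r hc h by simp
qed

lemma sl_step:
  assumes g: "g \<in> carrier G" and S: "S \<subseteq> H"
  shows "(\<lambda>h\<in>H. CA G S \<mu> w (g \<otimes> h)) = CA (G\<lparr>carrier := H\<rparr>) S \<mu> (\<lambda>h\<in>H. w (g \<otimes> h))"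
proof -
  have "\<And>h. h\<in>H \<Longrightarrow> (\<lambda>s\<in>S. w (g \<otimes> h \<otimes> s)) = (\<lambda>s\<in>S. (\<lambda>h'\<in>H. w (g \<otimes> h')) (h \<otimes> s))"
  proof (rule restrict_ext)
    fix h s assume h: "h \<in> H" and s: "s \<in> S"
    have "h \<otimes> s \<in> H" using Hm h s S by blast
    moreover have "g \<otimes> h \<otimes> s = g \<otimes> (h \<otimes> s)" using g h s S Hc by (simp add: m_assoc subset_iff)
    ultimately show "w (g \<otimes> h \<otimes> s) = (\<lambda>h'\<in>H. w (g \<otimes> h')) (h \<otimes> s)" by simp
  qed
  note X = this
  have gh: "\<And>h. h\<in>H \<Longrightarrow> g \<otimes> h \<in> carrier G" using g Hc by blast
  have R: "CA (G\<lparr>carrier := H\<rparr>) S \<mu> v = (\<lambda>h\<in>H. \<mu> (\<lambda>s\<in>S. v (h \<otimes> s)))" for v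
    by (simp add: CA_def)
  have L: "(\<lambda>h\<in>H. CA G S \<mu> w (g \<otimes> h)) = (\<lambda>h\<in>H. \<mu> (\<lambda>s\<in>S. w (g \<otimes> h \<otimes> s)))"
    by (rule restrict_ext) (simp add: CA_def gh)
  have M: "(\<lambda>h\<in>H. \<mu> (\<lambda>s\<in>S. w (g \<otimes> h \<otimes> s))) = (\<lambda>h\<in>H. \<mu> (\<lambda>s\<in>S. (\<lambda>h'\<in>H. w (g \<otimes> h')) (h \<otimes> s)))"
    by (rule restrict_ext) (simp only: X)
  show ?thesis unfolding L M R ..
qed

lemma sl_comm:
  assumes g: "g \<in> carrier G" and S: "S \<subseteq> H"
  shows "(\<lambda>h\<in>H. (CA G S \<mu> ^^ t) z (g \<otimes> h)) = (CA (G\<lparr>carrier := H\<rparr>) S \<mu> ^^ t) (\<lambda>h\<in>H. z (g \<otimes> h))"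
proof (induction t)
  case 0
  then show ?case by simp
next
  case (Suc t)
  have "(\<lambda>h\<in>H. (CA G S \<mu> ^^ Suc t) z (g \<otimes> h)) = (\<lambda>h\<in>H. CA G S \<mu> ((CA G S \<mu> ^^ t) z) (g \<otimes> h))"
    by simp
  also have "\<dots> = CA (G\<lparr>carrier := H\<rparr>) S \<mu> (\<lambda>h\<in>H. (CA G S \<mu> ^^ t) z (g \<otimes> h))"
    by (rule sl_step[OF g S])
  also have "\<dots> = CA (G\<lparr>carrier := H\<rparr>) S \<mu> ((CA (G\<lparr>carrier := H\<rparr>) S \<mu> ^^ t) (\<lambda>h\<in>H. z (g \<otimes> h)))"
    by (simp only: Suc.IH)
  also have "\<dots> = (CA (G\<lparr>carrier := H\<rparr>) S \<mu> ^^ Suc t) (\<lambda>h\<in>H. z (g \<otimes> h))" by simp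
  finally show ?case .
qed

lemma restrict_comm:
  assumes S: "S \<subseteq> H"
  shows "(\<lambda>h\<in>H. (CA G S \<mu> ^^ t) z h) = (CA (G\<lparr>carrier := H\<rparr>) S \<mu> ^^ t) (\<lambda>h\<in>H. z h)"
proof -
  have a: "\<And>f. (\<lambda>h\<in>H. f (\<one> \<otimes> h)) = (\<lambda>h\<in>H. f h)"
    by (rule restrict_ext) (use Hc in auto)
  show ?thesis using sl_comm[OF one_closed S, where \<mu>=\<mu> and t=t and z=z]
    unfolding a[of z] a[of "(CA G S \<mu> ^^ t) z"] .
qed


lemma configs_H: "configs (G\<lparr>carrier := H\<rparr>) A = H \<rightarrow>\<^sub>E A"
  by (simp add: configs_def)

lemma NS_lift:
  assumes S: "S \<subseteq> H" and ns: "NSf (G\<lparr>carrier := H\<rparr>) A (CA (G\<lparr>carrier := H\<rparr>) S \<mu>)"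
  shows "NSf G A (CA G S \<mu>)"
  unfolding NSf_def
proof (intro allI impI)
  let ?GH = "G\<lparr>carrier := H\<rparr>"
  let ?PH = "CA ?GH S \<mu>"
  let ?PG = "CA G S \<mu>"
  fix F assume F: "finite F \<and> F \<subseteq> carrier G"
  define Fr where "Fr r = (\<lambda>f. inv r \<otimes> f) ` {f\<in>F. rep G H f = r}" for r
  have Fr: "finite (Fr r) \<and> Fr r \<subseteq> H" for r
  proof
    show "finite (Fr r)" unfolding Fr_def using F by auto
    show "Fr r \<subseteq> H" unfolding Fr_def using F rep_P by auto
  qed
  have "\<forall>r\<in>carrier G. \<exists>x\<in>configs ?GH A. (\<exists>D. finite D \<and> D \<subseteq> carrier ?GH \<and>
      (\<forall>t. \<forall>y\<in>configs ?GH A. agree D x y \<longrightarrow> agree (Fr r) ((?PH^^t) x) ((?PH^^t) y)))"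
  proof
    fix r assume "r \<in> carrier G"
    show "\<exists>x\<in>configs ?GH A. (\<exists>D. finite D \<and> D \<subseteq> carrier ?GH \<and>
      (\<forall>t. \<forall>y\<in>configs ?GH A. agree D x y \<longrightarrow> agree (Fr r) ((?PH^^t) x) ((?PH^^t) y)))"
      by (rule ns[unfolded NSf_def, rule_format]) (use Fr in simp)
  qed
  then have "\<forall>r\<in>carrier G. \<exists>x. x \<in> configs ?GH A \<and> (\<exists>D. finite D \<and> D \<subseteq> H \<and>
      (\<forall>t. \<forall>y\<in>configs ?GH A. agree D x y \<longrightarrow> agree (Fr r) ((?PH^^t) x) ((?PH^^t) y)))"
    unfolding Bex_def by simp
  from bchoice[OF this] obtain X where X: "\<forall>r\<in>carrier G. X r \<in> configs ?GH A \<and> (\<exists>D. finite D \<and> D \<subseteq> H \<and>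
      (\<forall>t. \<forall>y\<in>configs ?GH A. agree D (X r) y \<longrightarrow> agree (Fr r) ((?PH^^t) (X r)) ((?PH^^t) y)))"
    by blast
  then have "\<forall>r\<in>carrier G. \<exists>D. finite D \<and> D \<subseteq> H \<and>
      (\<forall>t. \<forall>y\<in>configs ?GH A. agree D (X r) y \<longrightarrow> agree (Fr r) ((?PH^^t) (X r)) ((?PH^^t) y))"
    by blast
  from bchoice[OF this] obtain Dr where Dr: "\<forall>r\<in>carrier G. finite (Dr r) \<and> Dr r \<subseteq> H \<and>
      (\<forall>t. \<forall>y\<in>configs ?GH A. agree (Dr r) (X r) y \<longrightarrow> agree (Fr r) ((?PH^^t) (X r)) ((?PH^^t) y))"
    by blast
  have XH: "X r \<in> H \<rightarrow>\<^sub>E A" if "r \<in> carrier G" for r using X that configs_H by blast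
  define x where "x = (\<lambda>g\<in>carrier G. X (rep G H g) (inv (rep G H g) \<otimes> g))"
  define D where "D = (\<Union>r\<in>rep G H ` F. (\<lambda>d. r \<otimes> d) ` Dr r)"
  have xc: "x \<in> configs G A"
    unfolding configs_def x_def restrict_PiE_iff
  proof
    fix g assume g: "g \<in> carrier G"
    show "X (rep G H g) (inv (rep G H g) \<otimes> g) \<in> A"
      using XH[of "rep G H g"] rep_P[OF g] by blast
  qed
  have slx: "(\<lambda>h\<in>H. x (r \<otimes> h)) = X r" if r: "r \<in> carrier G" "rep G H r = r" for r
  proof
    fix h show "(\<lambda>h\<in>H. x (r \<otimes> h)) h = X r h"
    proof (cases "h \<in> H")
      case True
      then have hc: "h \<in> carrier G" using Hc by blast
      have "rep G H (r \<otimes> h) = r" using rep_mult[OF r(1) True] r(2) by simp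
      moreover have "inv r \<otimes> (r \<otimes> h) = h" using r hc by (simp add: m_assoc[symmetric])
      ultimately show ?thesis using True r hc unfolding x_def by simp
    next
      case False
      then show ?thesis using PiE_arb[OF XH[OF r(1)] False] by simp
    qed
  qed
  have repF: "r \<in> carrier G \<and> rep G H r = r" if rF: "r \<in> rep G H ` F" for r
  proof -
    obtain f where f: "f \<in> F" "r = rep G H f" using rF by blast
    then have fc: "f \<in> carrier G" using F by blast
    show ?thesis using rep_P[OF fc] rep_rep[OF fc] f(2) by simp
  qed
  show "\<exists>x\<in>configs G A. \<exists>D. finite D \<and> D \<subseteq> carrier G \<and>
     (\<forall>t. \<forall>y\<in>configs G A. agree D x y \<longrightarrow> agree F ((?PG^^t) x) ((?PG^^t) y))"
  proof (intro bexI[OF _ xc] exI[of _ D] conjI allI ballI impI)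
    show "finite D" unfolding D_def
    proof (rule finite_UN_I)
      show "finite (rep G H ` F)" using F by simp
      fix r assume "r \<in> rep G H ` F"
      then have "r \<in> carrier G" using repF by blast
      then have "finite (Dr r)" using Dr by blast
      then show "finite ((\<lambda>d. r \<otimes> d) ` Dr r)" by simp
    qed
    show "D \<subseteq> carrier G" unfolding D_def
    proof (rule UN_least)
      fix r assume "r \<in> rep G H ` F"
      then have r: "r \<in> carrier G" using repF by blast
      then have "Dr r \<subseteq> carrier G" using Dr Hc by blast
      then show "(\<lambda>d. r \<otimes> d) ` Dr r \<subseteq> carrier G" using r by auto
    qed
    fix t y assume y: "y \<in> configs G A" "agree D x y"
    show "agree F ((?PG^^t) x) ((?PG^^t) y)" unfolding agree_def
    proof
      fix f assume f: "f \<in> F"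
      define r where "r = rep G H f"
      have "r \<in> rep G H ` F" using f r_def by blast
      then have r: "r \<in> carrier G" "rep G H r = r" using repF by blast+
      define hf where "hf = inv r \<otimes> f"
      have fc: "f \<in> carrier G" using f F by blast
      have hf: "hf \<in> H" using rep_P[OF fc] unfolding hf_def r_def by blast
      have fr: "f = r \<otimes> hf" using r f F hf_def by (auto simp: m_assoc[symmetric])
      have hfF: "hf \<in> Fr r" unfolding Fr_def hf_def r_def using f by auto
      have yH: "(\<lambda>h\<in>H. y (r \<otimes> h)) \<in> configs ?GH A"
        unfolding configs_H restrict_PiE_iff
      proof
        fix h assume "h \<in> H"
        then have "r \<otimes> h \<in> carrier G" using r Hc by blast
        then show "y (r \<otimes> h) \<in> A" using y(1) unfolding configs_def by blast
      qed
      have ag: "agree (Dr r) (X r) (\<lambda>h\<in>H. y (r \<otimes> h))" unfolding agree_def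
      proof
        fix d assume d: "d \<in> Dr r"
        then have dH: "d \<in> H" using Dr r by blast
        have "r \<otimes> d \<in> D" unfolding D_def using d f r_def by blast
        then have "y (r \<otimes> d) = x (r \<otimes> d)" using y(2) unfolding agree_def by simp
        moreover have "X r d = x (r \<otimes> d)" using fun_cong[OF slx[OF r], of d] dH by simp
        ultimately show "X r d = (\<lambda>h\<in>H. y (r \<otimes> h)) d" using dH by simp
      qed
      have "((?PH^^t) (X r)) hf = ((?PH^^t) (\<lambda>h\<in>H. y (r \<otimes> h))) hf"
        using Dr[rule_format, OF r(1)] yH ag hfF unfolding agree_def by blast
      moreover have "(?PG^^t) x f = ((?PH^^t) (X r)) hf"
        using fun_cong[OF sl_comm[OF r(1) S, where \<mu>=\<mu> and t=t and z=x], of hf] hf fr slx[OF r] by simp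
      moreover have "(?PG^^t) y f = ((?PH^^t) (\<lambda>h\<in>H. y (r \<otimes> h))) hf"
        using fun_cong[OF sl_comm[OF r(1) S, where \<mu>=\<mu> and t=t and z=y], of hf] hf fr by simp
      ultimately show "(?PG^^t) x f = (?PG^^t) y f" by simp
    qed
  qed
qed

lemma EQ_restrict:
  assumes S: "S \<subseteq> H" and xc: "x \<in> configs G A" and eq: "EQf G A (CA G S \<mu>) x"
  shows "EQf (G\<lparr>carrier := H\<rparr>) A (CA (G\<lparr>carrier := H\<rparr>) S \<mu>) (\<lambda>h\<in>H. x h)"
  unfolding EQf_def
proof (intro allI impI)
  let ?GH = "G\<lparr>carrier := H\<rparr>"
  let ?PH = "CA ?GH S \<mu>"
  let ?PG = "CA G S \<mu>"
  fix F assume F: "finite F \<and> F \<subseteq> carrier ?GH"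
  then have F': "finite F" "F \<subseteq> H" by simp_all
  then have FG: "finite F \<and> F \<subseteq> carrier G" using Hc by blast
  then obtain D where D: "finite D" "D \<subseteq> carrier G"
    "\<forall>t. \<forall>y\<in>configs G A. agree D x y \<longrightarrow> agree F ((?PG^^t) x) ((?PG^^t) y)"
    using eq[unfolded EQf_def, rule_format, OF FG] by blast
  show "\<exists>D. finite D \<and> D \<subseteq> carrier ?GH \<and>
     (\<forall>t. \<forall>y\<in>configs ?GH A. agree D (\<lambda>h\<in>H. x h) y \<longrightarrow> agree F ((?PH^^t) (\<lambda>h\<in>H. x h)) ((?PH^^t) y))"
  proof (intro exI[of _ "D \<inter> H"] conjI allI ballI impI)
    show "finite (D \<inter> H)" using D by simp
    show "D \<inter> H \<subseteq> carrier ?GH" by simp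
    fix t y' assume y': "y' \<in> configs ?GH A" "agree (D \<inter> H) (\<lambda>h\<in>H. x h) y'"
    define y where "y = (\<lambda>g\<in>carrier G. if g \<in> H then y' g else x g)"
    have y'E: "y' \<in> H \<rightarrow>\<^sub>E A" using y'(1) configs_H by blast
    have yc: "y \<in> configs G A" unfolding y_def configs_def restrict_PiE_iff
      using y'E xc unfolding configs_def by auto
    have "agree D x y" unfolding agree_def
    proof
      fix d assume d: "d \<in> D"
      show "x d = y d"
      proof (cases "d \<in> H")
        case True
        then show ?thesis using y'(2) d D unfolding agree_def y_def by auto
      next
        case False
        then show ?thesis using d D unfolding y_def by auto
      qed
    qed
    then have ag: "agree F ((?PG^^t) x) ((?PG^^t) y)" using D(3) yc by blast
    have yr: "(\<lambda>h\<in>H. y h) = y'"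
    proof
      fix h show "(\<lambda>h\<in>H. y h) h = y' h"
      proof (cases "h \<in> H")
        case True
        then have "h \<in> carrier G" using Hc by blast
        then show ?thesis using True unfolding y_def by simp
      next
        case False
        then show ?thesis using PiE_arb[OF y'E False] by simp
      qed
    qed
    show "agree F ((?PH^^t) (\<lambda>h\<in>H. x h)) ((?PH^^t) y')" unfolding agree_def
    proof
      fix f assume f: "f \<in> F"
      then have fH: "f \<in> H" using F' by blast
      have c1: "(\<lambda>h\<in>H. (?PG^^t) x h) f = (?PH^^t) (\<lambda>h\<in>H. x h) f"
        by (rule fun_cong[OF restrict_comm[OF S, where \<mu>=\<mu> and t=t and z=x]])
      have c2: "(\<lambda>h\<in>H. (?PG^^t) y h) f = (?PH^^t) (\<lambda>h\<in>H. y h) f"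
        by (rule fun_cong[OF restrict_comm[OF S, where \<mu>=\<mu> and t=t and z=y]])
      have "(?PH^^t) (\<lambda>h\<in>H. x h) f = (?PG^^t) x f"
        using c1 fH by simp
      moreover have "(?PH^^t) y' f = (?PG^^t) y f"
        using c2 fH unfolding yr by simp
      ultimately show "(?PH^^t) (\<lambda>h\<in>H. x h) f = (?PH^^t) y' f" using ag f unfolding agree_def by simp
    qed
  qed
qed

end

end

theorem corollary1:
  fixes G :: "('g, 'b) monoid_scheme" and H :: "'g set"
  assumes "fin_gen_group G"
    and "kurka_dichotomy G"
    and "subgroup H G"
    and "fin_gen_group (G\<lparr>carrier := H\<rparr>)"
  shows "kurka_dichotomy (G\<lparr>carrier := H\<rparr>)"
proof -
  have gG: "group G" using assms(1) unfolding fin_gen_group_def by blast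
  obtain EG where EG: "sym_fin_gen G EG" using assms(1) unfolding fin_gen_group_def by blast
  have gH: "group (G\<lparr>carrier := H\<rparr>)" using assms(4) unfolding fin_gen_group_def by blast
  have sub: "subgroup H G" by (rule assms(3))
  interpret group G by (rule gG)
  show ?thesis unfolding kurka_dichotomy_def
  proof (intro allI impI)
    fix A E S \<mu>
    assume a: "finite A \<and> sym_fin_gen (G\<lparr>carrier := H\<rparr>) E \<and> local_rule (G\<lparr>carrier := H\<rparr>) A S \<mu> \<and>
        \<not> sensitive (G\<lparr>carrier := H\<rparr>) E A (CA (G\<lparr>carrier := H\<rparr>) S \<mu>)"
    have E: "sym_fin_gen (G\<lparr>carrier := H\<rparr>) E" using a by blast
    have lrH: "local_rule (G\<lparr>carrier := H\<rparr>) A S \<mu>" using a by blast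
    have S: "S \<subseteq> H" using lrH unfolding local_rule_def by simp
    have lrG: "local_rule G A S \<mu>" using lrH S Hc[OF sub] unfolding local_rule_def by auto
    have presH: "\<forall>z\<in>configs (G\<lparr>carrier := H\<rparr>) A. CA (G\<lparr>carrier := H\<rparr>) S \<mu> z \<in> configs (G\<lparr>carrier := H\<rparr>) A"
      using group.CA_configs[OF gH lrH] by blast
    have presG: "\<forall>z\<in>configs G A. CA G S \<mu> z \<in> configs G A"
      using CA_configs[OF lrG] by blast
    have "NSf (G\<lparr>carrier := H\<rparr>) A (CA (G\<lparr>carrier := H\<rparr>) S \<mu>)"
      using group.ns_iff[OF gH E presH] a by blast
    then have "NSf G A (CA G S \<mu>)" by (rule NS_lift[OF sub S])
    then have "\<not> sensitive G EG A (CA G S \<mu>)" using ns_iff[OF EG presG] by blast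
    then obtain x where x: "x \<in> configs G A" "equicont_point G EG A (CA G S \<mu>) x"
      using assms(2) a EG lrG unfolding kurka_dichotomy_def by blast
    have "EQf G A (CA G S \<mu>) x" using eq_iff[OF EG presG] x(2) by blast
    then have "EQf (G\<lparr>carrier := H\<rparr>) A (CA (G\<lparr>carrier := H\<rparr>) S \<mu>) (\<lambda>h\<in>H. x h)"
      by (rule EQ_restrict[OF sub S x(1)])
    then have "equicont_point (G\<lparr>carrier := H\<rparr>) E A (CA (G\<lparr>carrier := H\<rparr>) S \<mu>) (\<lambda>h\<in>H. x h)"
      using group.eq_iff[OF gH E presH] by blast
    moreover have "(\<lambda>h\<in>H. x h) \<in> configs (G\<lparr>carrier := H\<rparr>) A"
      using x(1) Hc[OF sub] unfolding configs_def by (auto simp: restrict_PiE_iff)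
    ultimately show "\<exists>x\<in>configs (G\<lparr>carrier := H\<rparr>) A. equicont_point (G\<lparr>carrier := H\<rparr>) E A (CA (G\<lparr>carrier := H\<rparr>) S \<mu>) x"
      by blast
  qed
qed

end
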